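(* Let $r\ge 1$, $N\ge 1$ and $n\ge 1$ be integers, and for an integer $e\ge 0$ let $$M_r(e)=\sum_{\substack{i_1+\cdots+i_r=e\\ i_1,\dots,i_r\ge 0}}\frac{(N!)^r}{(N+i_1)!\cdots(N+i_r)!}.$$ Then $$B_{N,n}^{(r)}=(-1)^n\,n!\,\det\big(c_{ij}\big)_{1\le i,j\le n},$$ where $c_{ij}=M_r(i-j+1)$ if $j\le i$, $c_{ij}=1$ if $j=i+1$, and $c_{ij}=0$ if $j>i+1$.
   Context: For positive integers $N$ and $r$, the higher order hypergeometric Bernoulli numbers $B^{(r)}_{N,n}$ ($n\ge0$) are defined by $$\left(\frac{x^N/N!}{e^x-\sum_{n=0}^{N-1}x^n/n!}\right)^r=\sum_{n=0}^\infty B_{N,n}^{(r)}\frac{x^n}{n!}.$$ *)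

theory Defs
  imports "HOL-Computational_Algebra.Formal_Power_Series" "HOL-Library.FuncSet"
    "Jordan_Normal_Form.Determinant"
begin

text \<open>The generating function (x^N/N!) / (e^x - sum_{n<N} x^n/n!) as a formal power series
  over the reals (fps division handles the common factor x^N).\<close>
definition hgB_gen :: "nat \<Rightarrow> real fps" where
  "hgB_gen N = (fps_const (1 / fact N) * fps_X ^ N) /
     (fps_exp 1 - Abs_fps (\<lambda>k. if k < N then 1 / fact k else 0))"

definition hgB :: "nat \<Rightarrow> nat \<Rightarrow> nat \<Rightarrow> real" where
  "hgB r N n = fact n * fps_nth (hgB_gen N ^ r) n"

definition M :: "nat \<Rightarrow> nat \<Rightarrow> nat \<Rightarrow> real" where
  "M r N e = (\<Sum>i \<in> {i. i \<in> {..<r} \<rightarrow>\<^sub>E {..e} \<and> sum i {..<r} = e}.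
      (fact N) ^ r / (\<Prod>k<r. fact (N + i k)))"

end

theory Submission imports Defs begin
definition G1 :: "nat \<Rightarrow> real fps" where
  "G1 N = Abs_fps (\<lambda>k. fact N / fact (N + k))"

lemma hgB_gen_G1: "hgB_gen N * G1 N = 1"
proof -
  define H :: "real fps" where "H = Abs_fps (\<lambda>k. 1 / fact (N + k))"
  have D: "fps_exp 1 - Abs_fps (\<lambda>k. if k < N then 1 / fact k else 0) = fps_X ^ N * H"
    by (rule fps_ext) (simp add: fps_X_power_mult_nth H_def)
  have H0: "fps_nth H 0 \<noteq> 0" by (simp add: H_def)
  have "hgB_gen N = (fps_X ^ N * fps_const (1 / fact N)) / (fps_X ^ N * H)"
    unfolding hgB_gen_def D by (simp add: mult.commute)
  also have "\<dots> = fps_const (1 / fact N) / H"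
    by (rule div_mult_mult1) simp
  also have "\<dots> = fps_const (1 / fact N) * inverse H"
    using H0 by (rule fps_divide_unit)
  finally have hg: "hgB_gen N = fps_const (1 / fact N) * inverse H" .
  have G: "G1 N = fps_const (fact N) * H"
    by (rule fps_ext) (simp add: G1_def H_def)
  have "hgB_gen N * G1 N = fps_const (1 / fact N) * fps_const (fact N) * (inverse H * H)"
    unfolding hg G by (simp add: algebra_simps)
  also have "\<dots> = 1" using H0 by (simp add: inverse_mult_eq_1)
  finally show ?thesis .
qed

definition SS :: "nat \<Rightarrow> nat \<Rightarrow> (nat \<Rightarrow> nat) set" where
  "SS r e = {i. i \<in> {..<r} \<rightarrow>\<^sub>E {..e} \<and> sum i {..<r} = e}"

lemma SS_finite: "finite (SS r e)"
  unfolding SS_def by (rule finite_subset[of _ "{..<r} \<rightarrow>\<^sub>E {..e}"]) (auto intro: finite_PiE)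

lemma M_0: "M 0 N e = (if e = 0 then 1 else 0)"
proof -
  have "{i. i \<in> {..<0::nat} \<rightarrow>\<^sub>E {..e} \<and> sum i {..<0} = e} = (if e = 0 then {\<lambda>_. undefined} else {})"
    by auto
  then show ?thesis unfolding M_def by simp
qed

lemma M_Suc: "M (Suc r) N e = (\<Sum>j\<le>e. (fact N / fact (N + j)) * M r N (e - j))"
proof -
  define f where "f = (\<lambda>r (i::nat\<Rightarrow>nat). (fact N :: real) ^ r / (\<Prod>k<r. fact (N + i k)))"
  have Mdef: "M r' N e' = sum (f r') (SS r' e')" for r' e' unfolding M_def f_def SS_def by simp
  define h where "h = (\<lambda>(j::nat, i'::nat\<Rightarrow>nat). i'(r := j))"
  have bij: "bij_betw h (Sigma {..e} (\<lambda>j. SS r (e - j))) (SS (Suc r) e)"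
  proof (rule bij_betwI[where g = "\<lambda>i. (i r, i(r := undefined))"])
    show "h \<in> Sigma {..e} (\<lambda>j. SS r (e - j)) \<rightarrow> SS (Suc r) e"
    proof
      fix x assume x: "x \<in> Sigma {..e} (\<lambda>j. SS r (e - j))"
      then obtain j i' where xe: "x = (j, i')" and j: "j \<le> e" and i': "i' \<in> SS r (e - j)" by auto
      have s: "sum (i'(r := j)) {..<r} = sum i' {..<r}" by (rule sum.cong) auto
      show "h x \<in> SS (Suc r) e" using i' j unfolding xe h_def SS_def
        by (auto simp: PiE_iff s lessThan_Suc extensional_def) (metis diff_le_self le_trans lessThan_iff)
    qed
    show "(\<lambda>i. (i r, i(r := undefined))) \<in> SS (Suc r) e \<rightarrow> Sigma {..e} (\<lambda>j. SS r (e - j))"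
    proof
      fix i assume i: "i \<in> SS (Suc r) e"
      have s: "sum (i(r := undefined)) {..<r} = sum i {..<r}" by (rule sum.cong) auto
      have se: "sum i {..<Suc r} = e" using i unfolding SS_def by auto
      have ir: "i r \<le> e" using i unfolding SS_def by auto
      show "(i r, i(r := undefined)) \<in> Sigma {..e} (\<lambda>j. SS r (e - j))"
        using i ir se unfolding SS_def by (auto simp: PiE_iff s extensional_def) (intro member_le_sum; auto)
    qed
    show "(\<lambda>i. (i r, i(r := undefined))) (h x) = x" if "x \<in> Sigma {..e} (\<lambda>j. SS r (e - j))" for x
      using that unfolding h_def SS_def by (auto simp: PiE_iff extensional_def fun_eq_iff)
    show "h ((\<lambda>i. (i r, i(r := undefined))) y) = y" if "y \<in> SS (Suc r) e" for y
      unfolding h_def by auto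
  qed
  have val: "f (Suc r) (h x) = (fact N / fact (N + fst x)) * f r (snd x)" for x
  proof -
    obtain j i' where xe: "x = (j, i')" by (cases x)
    have p: "(\<Prod>k<r. fact (N + (i'(r := j)) k)) = (\<Prod>k<r. (fact (N + i' k) :: real))"
      by (rule prod.cong) auto
    show ?thesis unfolding xe h_def f_def by (simp add: p)
  qed
  have "M (Suc r) N e = sum (f (Suc r)) (SS (Suc r) e)" by (rule Mdef)
  also have "\<dots> = sum (\<lambda>x. f (Suc r) (h x)) (Sigma {..e} (\<lambda>j. SS r (e - j)))"
    by (rule sum.reindex_bij_betw[OF bij, symmetric])
  also have "\<dots> = (\<Sum>j\<le>e. \<Sum>i'\<in>SS r (e - j). f (Suc r) (h (j, i')))"
    using sum.Sigma[of "{..e}" "\<lambda>j. SS r (e - j)" "\<lambda>j i'. f (Suc r) (h (j, i'))"]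
    by (simp add: SS_finite split_def)
  also have "\<dots> = (\<Sum>j\<le>e. (fact N / fact (N + j)) * M r N (e - j))"
    by (simp add: val Mdef sum_distrib_left)
  finally show ?thesis .
qed

lemma G1_power_nth: "fps_nth (G1 N ^ r) e = M r N e"
proof (induction r arbitrary: e)
  case 0
  then show ?case by (simp add: M_0)
next
  case (Suc r)
  have "fps_nth (G1 N ^ Suc r) e = (\<Sum>i=0..e. fps_nth (G1 N) i * fps_nth (G1 N ^ r) (e - i))"
    by (simp add: fps_mult_nth)
  also have "\<dots> = M (Suc r) N e"
    using Suc.IH[unfolded G1_def] by (simp add: M_Suc G1_def atLeast0AtMost)
  finally show ?case .
qed

lemma prod_list_map_upt: "prod_list (map f [0..<n]) = prod f {..<n}"
  by (induct n) (auto simp: lessThan_Suc mult.commute)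

lemma hess:
  fixes a b :: "nat \<Rightarrow> real"
  assumes a0: "a 0 = 1"
    and rec: "\<And>m. (\<Sum>k\<le>m. b k * a (m - k)) = (if m = 0 then 1 else 0)"
  shows "b n = (-1) ^ n * det (mat n n (\<lambda>(i, j). if j \<le> i then a (i + 1 - j)
                            else if j = i + 1 then 1 else 0))"
proof -
  define T where "T = mat (Suc n) (Suc n) (\<lambda>(i,j). if j \<le> i then a (i - j) else 0)"
  define E where "E = mat (Suc n) (Suc n) (\<lambda>(i,j). if j = n then b i else if i = j then 1 else (0::real))"
  define T' where "T' = mat (Suc n) (Suc n) (\<lambda>(i,j). if j = n then (if i = 0 then 1 else 0)
     else if j \<le> i then a (i - j) else (0::real))"
  have TC: "T \<in> carrier_mat (Suc n) (Suc n)" and EC: "E \<in> carrier_mat (Suc n) (Suc n)"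
    and T'C: "T' \<in> carrier_mat (Suc n) (Suc n)" by (auto simp: T_def E_def T'_def)
  have TE: "T * E = T'"
  proof (rule eq_matI)
    fix i j assume i: "i < dim_row T'" and j: "j < dim_col T'"
    then have i: "i < Suc n" and j: "j < Suc n" by (auto simp: T'_def)
    have "(T * E) $$ (i, j) = (\<Sum>k<Suc n. T $$ (i, k) * E $$ (k, j))"
      using i j TC EC by (simp add: scalar_prod_def atLeast0LessThan)
    also have "\<dots> = T' $$ (i, j)"
    proof (cases "j = n")
      case True
      have "(\<Sum>k<Suc n. T $$ (i, k) * E $$ (k, j)) = (\<Sum>k<Suc n. if k \<le> i then b k * a (i - k) else 0)"
        by (rule sum.cong) (auto simp: T_def E_def True i)
      also have "\<dots> = (\<Sum>k\<le>i. b k * a (i - k))"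
        using i by (intro sum.mono_neutral_cong_right) auto
      also have "\<dots> = T' $$ (i, j)" using rec[of i] i True by (simp add: T'_def)
      finally show ?thesis .
    next
      case False
      have "(\<Sum>k<Suc n. T $$ (i, k) * E $$ (k, j)) = (\<Sum>k<Suc n. if k = j then T $$ (i, j) else 0)"
        using j by (intro sum.cong) (auto simp: E_def False)
      also have "\<dots> = T' $$ (i, j)" using i j False by (simp add: T_def T'_def)
      finally show ?thesis .
    qed
    finally show "(T * E) $$ (i, j) = T' $$ (i, j)" .
  qed (auto simp: T_def E_def T'_def)
  have dT: "det T = 1"
  proof -
    have "det T = prod_list (diag_mat T)"
      by (rule det_lower_triangular[OF _ TC]) (auto simp: T_def)
    also have "\<dots> = 1" by (simp add: diag_mat_def T_def a0 prod_list_map_upt)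
    finally show ?thesis .
  qed
  have dE: "det E = b n"
  proof -
    have "det E = prod_list (diag_mat E)"
      by (rule det_upper_triangular[OF _ EC]) (auto simp: E_def upper_triangular_def)
    also have "\<dots> = (\<Prod>i<Suc n. if i = n then b i else 1)"
      by (simp add: diag_mat_def E_def prod_list_map_upt)
    also have "\<dots> = b n" by (simp add: lessThan_Suc)
    finally show ?thesis .
  qed
  have "det T' = (\<Sum>i<Suc n. T' $$ (i, n) * cofactor T' i n)"
    by (rule laplace_expansion_column[OF T'C]) simp
  also have "\<dots> = T' $$ (0, n) * cofactor T' 0 n + (\<Sum>i<n. T' $$ (Suc i, n) * cofactor T' (Suc i) n)"
    by (rule sum.lessThan_Suc_shift)
  also have "\<dots> = cofactor T' 0 n" by (simp add: T'_def)
  also have "\<dots> = (-1) ^ n * det (mat_delete T' 0 n)" by (simp add: cofactor_def)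
  also have "mat_delete T' 0 n = mat n n (\<lambda>(i, j). if j \<le> i then a (i + 1 - j)
                            else if j = i + 1 then 1 else 0)"
    by (rule eq_matI) (auto simp: mat_delete_def T'_def a0)
  finally have dT': "det T' = (-1) ^ n * det (mat n n (\<lambda>(i, j). if j \<le> i then a (i + 1 - j)
                            else if j = i + 1 then 1 else 0))" .
  have "b n = det T * det E" by (simp add: dT dE)
  also have "\<dots> = det (T * E)" by (rule det_mult[OF TC EC, symmetric])
  finally show ?thesis using TE dT' by simp
qed

theorem theorem2:
  fixes r N n :: nat
  assumes "r \<ge> 1" and "N \<ge> 1" and "n \<ge> 1"
  shows "hgB r N n = (-1) ^ n * fact n *
    det (mat n n (\<lambda>(i, j). if j \<le> i then M r N (i + 1 - j)
                            else if j = i + 1 then 1 else 0))"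
proof -
  define b where "b = (\<lambda>k. fps_nth (hgB_gen N ^ r) k)"
  have one: "hgB_gen N ^ r * G1 N ^ r = 1"
    by (simp add: power_mult_distrib[symmetric] hgB_gen_G1)
  have a0: "M r N 0 = 1"
    using G1_power_nth[of N r 0] by (simp add: fps_nth_power_0 G1_def)
  have rec: "(\<Sum>k\<le>m. b k * M r N (m - k)) = (if m = 0 then 1 else 0)" for m
  proof -
    have "fps_nth (hgB_gen N ^ r * G1 N ^ r) m = (\<Sum>k\<le>m. b k * M r N (m - k))"
      by (simp add: fps_mult_nth b_def G1_power_nth atLeast0AtMost)
    then show ?thesis using one by simp
  qed
  have "b n = (-1) ^ n * det (mat n n (\<lambda>(i, j). if j \<le> i then M r N (i + 1 - j)
                            else if j = i + 1 then 1 else 0))"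
    by (rule hess[of "M r N" b, OF a0 rec])
  then show ?thesis unfolding hgB_def b_def[symmetric] by simp
qed

end
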